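(* Let $E$ be a second countable Stone space and let $\gamma_1,\ldots,\gamma_k$ be pairwise compatible non-peripheral cuts of $E$. Then the graph $\big(L(\gamma_1)\cap\cdots\cap L(\gamma_k)\big)^\perp$ has at most $k+1$ connected components. Moreover, if it has exactly $k+1$ components, then: (1) no $\gamma_i$ is outermost; (2) no pair $\gamma_i,\gamma_j$ ($i\ne j$) is a peripheral pair; (3) for every triple of distinct indices $i,j,l$ such that the adjacency graph $A(\{\gamma_i,\gamma_j,\gamma_l\})$ is a triangle, one may write $\gamma_i=U_i\sqcup V_i$, $\gamma_j=U_j\sqcup V_j$, $\gamma_l=U_l\sqcup V_l$ so that $U_i\cap U_j=U_i\cap U_l=U_j\cap U_l=\varnothing$ and $V_i\cap V_j\cap V_l\ne\varnothing$.
   Context: A Stone space is a compact, Hausdorff, totally disconnected space. A cut of $E$ is an unordered partition of $E$ into two disjoint clopen sets $U,V$, written $U\sqcup V$; it is non-peripheral if each of $U,V$ contains at least two points, and outermost (if non-peripheral) when one side has exactly two points. Two cuts $U\sqcup V$, $U'\sqcup V'$ cross if all four sets $U\cap U'$, $U\cap V'$, $V\cap U'$, $V\cap V'$ are nonempty; otherwise they are compatible. The complex of cuts $\mathscr{C}(E)$ is the simplicial graph whose vertices are the non-peripheral cuts, with edges between distinct compatible cuts. Two distinct non-peripheral cuts form a peripheral pair if they are compatible and one of the four intersections above is a singleton. The link $L(\gamma)$ is the full subgraph of $\mathscr{C}(E)$ on the vertices adjacent to $\gamma$, and $L(\gamma_1)\cap\cdots\cap L(\gamma_k)$ is the full subgraph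 on the vertices adjacent to every $\gamma_i$. For a graph $L$, the opposite graph $L^\perp$ has the same vertices, with an edge between distinct vertices exactly when they are not adjacent in $L$. For a finite collection $\Gamma$ of pairwise compatible non-peripheral cuts, two cuts $\gamma,\gamma'\in\Gamma$ are adjacent if some non-peripheral cut crosses $\gamma$ and $\gamma'$ and no other cut of $\Gamma$; the adjacency graph $A(\Gamma)$ has vertex set $\Gamma$ and edges between adjacent cuts. *)

theory Defs
  imports "HOL-Analysis.Analysis"
begin

definition totally_disconnected_space :: "'a topology \<Rightarrow> bool" where
  "totally_disconnected_space X \<longleftrightarrow> (\<forall>S. connectedin X S \<longrightarrow> (\<exists>a. S \<subseteq> {a}))"

definition stone_space :: "'a topology \<Rightarrow> bool" where
  "stone_space X \<longleftrightarrow> compact_space X \<and> Hausdorff_space X \<and> totally_disconnected_space X"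

text \<open>A cut is an unordered partition of the space into two disjoint (nonempty) clopen sets,
  represented as the two-element set of its sides.\<close>
definition is_cut :: "'a topology \<Rightarrow> 'a set set \<Rightarrow> bool" where
  "is_cut X c \<longleftrightarrow> (\<exists>U V. c = {U, V} \<and> openin X U \<and> closedin X U \<and> openin X V \<and> closedin X V
      \<and> U \<inter> V = {} \<and> U \<union> V = topspace X \<and> U \<noteq> {} \<and> V \<noteq> {})"

definition non_peripheral :: "'a topology \<Rightarrow> 'a set set \<Rightarrow> bool" where
  "non_peripheral X c \<longleftrightarrow> is_cut X c \<and> (\<forall>A\<in>c. \<exists>x y. x \<in> A \<and> y \<in> A \<and> x \<noteq> y)"

definition outermost :: "'a topology \<Rightarrow> 'a set set \<Rightarrow> bool" where
  "outermost X c \<longleftrightarrow> non_peripheral X c \<and> (\<exists>A\<in>c. finite A \<and> card A = 2)"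

definition crosses :: "'a set set \<Rightarrow> 'a set set \<Rightarrow> bool" where
  "crosses c d \<longleftrightarrow> (\<forall>A\<in>c. \<forall>B\<in>d. A \<inter> B \<noteq> {})"

definition compatible :: "'a set set \<Rightarrow> 'a set set \<Rightarrow> bool" where
  "compatible c d \<longleftrightarrow> \<not> crosses c d"

definition peripheral_pair :: "'a topology \<Rightarrow> 'a set set \<Rightarrow> 'a set set \<Rightarrow> bool" where
  "peripheral_pair X c d \<longleftrightarrow> non_peripheral X c \<and> non_peripheral X d \<and> c \<noteq> d \<and> compatible c d
      \<and> (\<exists>A\<in>c. \<exists>B\<in>d. \<exists>x. A \<inter> B = {x})"

definition cc_adj :: "'a topology \<Rightarrow> 'a set set \<Rightarrow> 'a set set \<Rightarrow> bool" where
  "cc_adj X c d \<longleftrightarrow> non_peripheral X c \<and> non_peripheral X d \<and> c \<noteq> d \<and> compatible c d"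

text \<open>Vertex set of the full subgraph \<open>L(\<gamma>_1) \<inter> ... \<inter> L(\<gamma>_k)\<close> (cuts indexed by \<open>i < k\<close>).\<close>
definition link_inter :: "'a topology \<Rightarrow> (nat \<Rightarrow> 'a set set) \<Rightarrow> nat \<Rightarrow> 'a set set set" where
  "link_inter X g k = {d. non_peripheral X d \<and> (\<forall>i<k. cc_adj X (g i) d)}"

text \<open>Edge relation of the opposite graph \<open>L^\<perp>\<close> of the full subgraph of the complex of cuts on \<open>S\<close>.\<close>
definition opp_adj :: "'a topology \<Rightarrow> 'a set set set \<Rightarrow> 'a set set \<Rightarrow> 'a set set \<Rightarrow> bool" where
  "opp_adj X S c d \<longleftrightarrow> c \<in> S \<and> d \<in> S \<and> c \<noteq> d \<and> \<not> cc_adj X c d"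

definition opp_components :: "'a topology \<Rightarrow> 'a set set set \<Rightarrow> 'a set set set set" where
  "opp_components X S = {{d \<in> S. (opp_adj X S)\<^sup>*\<^sup>* c d} | c. c \<in> S}"

definition Gamma_adjacent :: "'a topology \<Rightarrow> 'a set set set \<Rightarrow> 'a set set \<Rightarrow> 'a set set \<Rightarrow> bool" where
  "Gamma_adjacent X \<Gamma> c d \<longleftrightarrow> (\<exists>e. non_peripheral X e \<and> crosses e c \<and> crosses e d
      \<and> (\<forall>h\<in>\<Gamma>. h \<noteq> c \<and> h \<noteq> d \<longrightarrow> \<not> crosses e h))"

definition adj_triangle :: "'a topology \<Rightarrow> 'a set set \<Rightarrow> 'a set set \<Rightarrow> 'a set set \<Rightarrow> bool" where
  "adj_triangle X a b c \<longleftrightarrow> a \<noteq> b \<and> a \<noteq> c \<and> b \<noteq> c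
     \<and> Gamma_adjacent X {a, b, c} a b \<and> Gamma_adjacent X {a, b, c} a c \<and> Gamma_adjacent X {a, b, c} b c"

end

theory Submission imports Defs begin

lemma cut_side:
  assumes "is_cut X c" "A \<in> c"
  shows "c = {A, topspace X - A}" "A \<subseteq> topspace X" "A \<noteq> {}" "topspace X - A \<noteq> {}"
    "openin X A" "closedin X A" "openin X (topspace X - A)" "closedin X (topspace X - A)"
proof -
  obtain U V where h: "c = {U, V}" "openin X U" "closedin X U" "openin X V" "closedin X V"
      "U \<inter> V = {}" "U \<union> V = topspace X" "U \<noteq> {}" "V \<noteq> {}"
    using assms(1) unfolding is_cut_def by blast
  have "A = U \<and> topspace X - A = V \<or> A = V \<and> topspace X - A = U"
    using h assms(2) by blast
  then show "c = {A, topspace X - A}" "A \<subseteq> topspace X" "A \<noteq> {}" "topspace X - A \<noteq> {}"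
    "openin X A" "closedin X A" "openin X (topspace X - A)" "closedin X (topspace X - A)"
    using h by auto
qed

lemma crosses_sym: "crosses c d \<longleftrightarrow> crosses d c"
  unfolding crosses_def by blast

lemma stone_sep:
  assumes "stone_space X" "x \<in> topspace X" "y \<in> topspace X" "x \<noteq> y"
  shows "\<exists>T. openin X T \<and> closedin X T \<and> x \<in> T \<and> y \<notin> T"
proof -
  have cH: "compact_space X" "Hausdorff_space X" and td: "totally_disconnected_space X"
    using assms(1) unfolding stone_space_def by auto
  have q: "quasi_component_of X x = connected_component_of X x"
    using cH by (intro quasi_eq_connected_component_of) auto
  have "connectedin X (connected_component_of_set X x)"
    by (simp add: connectedin_connected_component_of)
  then obtain a where "connected_component_of_set X x \<subseteq> {a}"
    using td unfolding totally_disconnected_space_def by blast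
  moreover have "x \<in> connected_component_of_set X x"
    using assms(2) by (simp add: connected_component_of_refl)
  ultimately have "\<not> connected_component_of X x y" using assms(4) by auto
  then have "\<not> quasi_component_of X x y" using q by metis
  then obtain T where "closedin X T" "openin X T" "\<not> (x \<in> T \<longleftrightarrow> y \<in> T)"
    using assms(2,3) unfolding quasi_component_of_def by blast
  then show ?thesis
  proof (cases "x \<in> T")
    case True then show ?thesis using \<open>closedin X T\<close> \<open>openin X T\<close> \<open>\<not> (x \<in> T \<longleftrightarrow> y \<in> T)\<close> by blast
  next
    case False
    then show ?thesis using \<open>closedin X T\<close> \<open>openin X T\<close> \<open>\<not> (x \<in> T \<longleftrightarrow> y \<in> T)\<close> assms(2)
      by (intro exI[of _ "topspace X - T"]) auto
  qed
qed

lemma compat_disj: "compatible c d \<Longrightarrow> \<exists>A\<in>c. \<exists>B\<in>d. A \<inter> B = {}"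
  unfolding compatible_def crosses_def by blast

locale cfg =
  fixes X :: "'a topology" and g :: "nat \<Rightarrow> 'a set set" and k :: nat
  assumes stone: "stone_space X"
    and np: "\<And>i. i < k \<Longrightarrow> non_peripheral X (g i)"
    and inj: "inj_on g {..<k}"
    and comp: "\<And>i j. i < k \<Longrightarrow> j < k \<Longrightarrow> compatible (g i) (g j)"
begin

abbreviation "E \<equiv> topspace X"
abbreviation "L \<equiv> link_inter X g k"

lemma gcut: "i < k \<Longrightarrow> is_cut X (g i)"
  using np non_peripheral_def by blast

lemma L_np: "d \<in> L \<Longrightarrow> non_peripheral X d"
  unfolding link_inter_def by blast
lemma L_cut: "d \<in> L \<Longrightarrow> is_cut X d"
  unfolding link_inter_def non_peripheral_def by blast
lemma L_ne: "d \<in> L \<Longrightarrow> i < k \<Longrightarrow> g i \<noteq> d"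
  unfolding link_inter_def cc_adj_def by blast
lemma L_comp: "d \<in> L \<Longrightarrow> i < k \<Longrightarrow> compatible (g i) d"
  unfolding link_inter_def cc_adj_def by blast

lemma side_unique:
  assumes "i < k" "d \<in> L" "S1 \<in> g i" "S2 \<in> g i" "D1 \<in> d" "D2 \<in> d" "D1 \<subseteq> S1" "D2 \<subseteq> S2"
  shows "S1 = S2"
proof (rule ccontr)
  assume ne: "S1 \<noteq> S2"
  have gi: "g i = {S1, E - S1}" "S1 \<subseteq> E" using cut_side[OF gcut[OF assms(1)] assms(3)] by auto
  have s2: "S2 = E - S1" using gi ne assms(4) by auto
  have dd: "d = {D1, E - D1}" "D1 \<noteq> {}" "D1 \<subseteq> E" using cut_side[OF L_cut[OF assms(2)] assms(5)] by auto
  show False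
  proof (cases "D2 = D1")
    case True
    then show ?thesis using assms(7,8) s2 dd by blast
  next
    case False
    then have "D2 = E - D1" using dd assms(6) by auto
    then have "D1 = S1" using assms(7,8) s2 gi dd by blast
    then show ?thesis using gi dd L_ne[OF assms(2,1)] by simp
  qed
qed

lemma side_exists:
  assumes "i < k" "d \<in> L"
  shows "\<exists>S\<in>g i. \<exists>D\<in>d. D \<subseteq> S"
proof -
  obtain A B where "A \<in> g i" "B \<in> d" "A \<inter> B = {}"
    using compat_disj[OF L_comp[OF assms(2,1)]] by blast
  moreover have "E - A \<in> g i" using cut_side[OF gcut[OF assms(1)] \<open>A \<in> g i\<close>] by auto
  moreover have "B \<subseteq> E" using cut_side[OF L_cut[OF assms(2)] \<open>B \<in> d\<close>] by auto
  ultimately show ?thesis by blast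
qed

definition ori :: "'a set set \<Rightarrow> nat \<Rightarrow> 'a set" where
  "ori d = (\<lambda>i. if i < k then (THE S. S \<in> g i \<and> (\<exists>D\<in>d. D \<subseteq> S)) else {})"

lemma ori_eq:
  assumes "d \<in> L" "i < k" "S \<in> g i" "D \<in> d" "D \<subseteq> S"
  shows "ori d i = S"
proof -
  have "(THE S. S \<in> g i \<and> (\<exists>D\<in>d. D \<subseteq> S)) = S"
    apply (rule the_equality)
    using assms side_unique by blast+
  then show ?thesis using assms(2) unfolding ori_def by simp
qed

lemma ori_in:
  assumes "d \<in> L" "i < k"
  shows "ori d i \<in> g i" "\<exists>D\<in>d. D \<subseteq> ori d i"
  using side_exists[OF assms(2,1)] ori_eq[OF assms(1,2)] by metis+

lemma ori_out: "\<not> i < k \<Longrightarrow> ori d i = {}"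
  unfolding ori_def by simp

definition cons :: "nat \<Rightarrow> (nat \<Rightarrow> 'a set) set" where
  "cons n = {\<sigma>. (\<forall>i<n. \<sigma> i \<in> g i) \<and> (\<forall>i. n \<le> i \<longrightarrow> \<sigma> i = {}) \<and> (\<forall>i<n. \<forall>j<n. \<sigma> i \<inter> \<sigma> j \<noteq> {})}"

lemma ori_cons:
  assumes "d \<in> L"
  shows "ori d \<in> cons k"
proof -
  have "ori d i \<inter> ori d j \<noteq> {}" if ij: "i < k" "j < k" for i j
  proof
    assume emp: "ori d i \<inter> ori d j = {}"
    obtain D1 D2 where D: "D1 \<in> d" "D1 \<subseteq> ori d i" "D2 \<in> d" "D2 \<subseteq> ori d j"
      using ori_in(2)[OF assms ij(1)] ori_in(2)[OF assms ij(2)] by metis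
    have dd: "d = {D1, E - D1}" "D1 \<noteq> {}" "D1 \<subseteq> E" using cut_side[OF L_cut[OF assms] D(1)] by auto
    have gi: "g i = {ori d i, E - ori d i}" "ori d i \<subseteq> E"
      using cut_side[OF gcut[OF ij(1)] ori_in(1)[OF assms ij(1)]] by auto
    show False
    proof (cases "D2 = D1")
      case True then show ?thesis using D(2,4) dd(2) emp True by blast
    next
      case False
      then have "D2 = E - D1" using dd D by auto
      then have "ori d i = D1" using D(2,4) emp gi(2) by blast
      then show ?thesis using gi dd L_ne[OF assms ij(1)] by simp
    qed
  qed
  then show ?thesis unfolding cons_def using ori_in ori_out assms by auto
qed


lemma cons_restrict: "\<sigma> \<in> cons (Suc n) \<Longrightarrow> \<sigma>(n := {}) \<in> cons n"
  unfolding cons_def by auto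

lemma upd_eq: "f(n := {}) = h(n := {}) \<Longrightarrow> f n = h n \<Longrightarrow> f = h"
  by (rule ext) (metis fun_upd_apply)

definition doubly :: "nat \<Rightarrow> (nat \<Rightarrow> 'a set) \<Rightarrow> bool" where
  "doubly n \<tau> \<longleftrightarrow> (\<forall>B\<in>g n. \<tau>(n := B) \<in> cons (Suc n))"

lemma doubly_unique:
  assumes "n < k" "\<tau> \<in> cons n" "\<tau>' \<in> cons n" "doubly n \<tau>" "doubly n \<tau>'"
  shows "\<tau> = \<tau>'"
proof
  fix i
  show "\<tau> i = \<tau>' i"
  proof (cases "i < n")
    case False then show ?thesis using assms(2,3) unfolding cons_def by auto
  next
    case True
    show ?thesis
    proof (rule ccontr)
      assume ne: "\<tau> i \<noteq> \<tau>' i"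
      have ik: "i < k" using True assms(1) by simp
      have t: "\<tau> i \<in> g i" "\<tau>' i \<in> g i" using assms(2,3) True unfolding cons_def by auto
      have gi: "g i = {\<tau> i, E - \<tau> i}" using cut_side[OF gcut[OF ik] t(1)] by auto
      have gi2: "g i = {\<tau> i, \<tau>' i}" using gi t ne by auto
      have m1: "\<tau> i \<inter> B \<noteq> {}" if "B \<in> g n" for B
      proof -
        have "\<tau>(n := B) \<in> cons (Suc n)" using assms(4) that unfolding doubly_def by blast
        then have "\<forall>a<Suc n. \<forall>b<Suc n. (\<tau>(n := B)) a \<inter> (\<tau>(n := B)) b \<noteq> {}" unfolding cons_def by blast
        then have "(\<tau>(n := B)) i \<inter> (\<tau>(n := B)) n \<noteq> {}" using True by (meson lessI less_SucI)
        then show ?thesis using True by simp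
      qed
      have m2: "\<tau>' i \<inter> B \<noteq> {}" if "B \<in> g n" for B
      proof -
        have "\<tau>'(n := B) \<in> cons (Suc n)" using assms(5) that unfolding doubly_def by blast
        then have "\<forall>a<Suc n. \<forall>b<Suc n. (\<tau>'(n := B)) a \<inter> (\<tau>'(n := B)) b \<noteq> {}" unfolding cons_def by blast
        then have "(\<tau>'(n := B)) i \<inter> (\<tau>'(n := B)) n \<noteq> {}" using True by (meson lessI less_SucI)
        then show ?thesis using True by simp
      qed
      have "crosses (g i) (g n)" unfolding crosses_def gi2 using m1 m2 by blast
      then show False using comp[OF ik assms(1)] unfolding compatible_def by blast
    qed
  qed
qed

lemma doubly_of:
  assumes "n < k" "\<sigma>1 \<in> cons (Suc n)" "\<sigma>2 \<in> cons (Suc n)" "\<sigma>1 \<noteq> \<sigma>2" "\<sigma>1(n := {}) = \<sigma>2(n := {})"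
  shows "doubly n (\<sigma>1(n := {}))" "g n = {\<sigma>1 n, \<sigma>2 n}"
proof -
  have ne: "\<sigma>1 n \<noteq> \<sigma>2 n"
  proof
    assume "\<sigma>1 n = \<sigma>2 n"
    then have "\<sigma>1 = \<sigma>2" using upd_eq[OF assms(5)] by blast
    then show False using assms(4) by simp
  qed
  have s: "\<sigma>1 n \<in> g n" "\<sigma>2 n \<in> g n" using assms(2,3) unfolding cons_def by auto
  have gn: "g n = {\<sigma>1 n, E - \<sigma>1 n}" using cut_side(1)[OF gcut[OF assms(1)] s(1)] .
  have "\<sigma>2 n = E - \<sigma>1 n" using s(2) ne unfolding gn by blast
  then show g2: "g n = {\<sigma>1 n, \<sigma>2 n}" using gn by simp
  have e1: "(\<sigma>1(n := {}))(n := \<sigma>1 n) = \<sigma>1" by simp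
  have "(\<sigma>1(n := {}))(n := \<sigma>2 n) = (\<sigma>2(n := {}))(n := \<sigma>2 n)" by (simp only: assms(5))
  then have e2: "(\<sigma>1(n := {}))(n := \<sigma>2 n) = \<sigma>2" by simp
  show "doubly n (\<sigma>1(n := {}))"
    unfolding doubly_def
  proof
    fix B assume "B \<in> g n"
    then have "B = \<sigma>1 n \<or> B = \<sigma>2 n" using g2 by blast
    then show "(\<sigma>1(n := {}))(n := B) \<in> cons (Suc n)"
      using e1 e2 assms(2,3) by metis
  qed
qed

lemma cons_finite_card: "n \<le> k \<Longrightarrow> finite (cons n) \<and> card (cons n) \<le> n + 1"
proof (induction n)
  case 0
  have "cons 0 = {\<lambda>i. {}}" unfolding cons_def by auto
  then show ?case by simp
next
  case (Suc n)
  have nk: "n < k" using Suc.prems by simp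
  have IH: "finite (cons n)" "card (cons n) \<le> n + 1" using Suc.IH Suc.prems by auto
  have fg: "finite (g n)" using cut_side[OF gcut[OF nk]] by (metis equals0I finite.emptyI finite_insert)
  have sub: "cons (Suc n) \<subseteq> (\<lambda>(\<tau>, S). \<tau>(n := S)) ` (cons n \<times> g n)"
  proof
    fix \<sigma> assume a: "\<sigma> \<in> cons (Suc n)"
    then have "(\<sigma>(n := {}), \<sigma> n) \<in> cons n \<times> g n" using cons_restrict unfolding cons_def by auto
    moreover have "\<sigma> = (\<lambda>(\<tau>, S). \<tau>(n := S)) (\<sigma>(n := {}), \<sigma> n)" by simp
    ultimately show "\<sigma> \<in> (\<lambda>(\<tau>, S). \<tau>(n := S)) ` (cons n \<times> g n)" by blast
  qed
  have fin: "finite (cons (Suc n))" using finite_subset[OF sub] IH(1) fg by blast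
  let ?r = "\<lambda>\<sigma>. \<sigma>(n := {})"
  have rsub: "?r ` A \<subseteq> cons n" if "A \<subseteq> cons (Suc n)" for A using that cons_restrict by blast
  have "card (cons (Suc n)) \<le> card (cons n) + 1"
  proof (cases "inj_on ?r (cons (Suc n))")
    case True
    then have "card (cons (Suc n)) = card (?r ` cons (Suc n))" by (simp add: card_image)
    also have "\<dots> \<le> card (cons n)" using rsub[of "cons (Suc n)"] IH(1) by (intro card_mono) auto
    finally show ?thesis by simp
  next
    case False
    then obtain \<sigma>1 \<sigma>2 where s12: "\<sigma>1 \<in> cons (Suc n)" "\<sigma>2 \<in> cons (Suc n)" "\<sigma>1 \<noteq> \<sigma>2" "?r \<sigma>1 = ?r \<sigma>2"
      unfolding inj_on_def by blast
    note d12 = doubly_of[OF nk s12]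
    have "inj_on ?r (cons (Suc n) - {\<sigma>1})"
    proof (rule inj_onI)
      fix \<sigma> \<sigma>' assume a: "\<sigma> \<in> cons (Suc n) - {\<sigma>1}" "\<sigma>' \<in> cons (Suc n) - {\<sigma>1}" "?r \<sigma> = ?r \<sigma>'"
      show "\<sigma> = \<sigma>'"
      proof (rule ccontr)
        assume ne: "\<sigma> \<noteq> \<sigma>'"
        have ss: "\<sigma> \<in> cons (Suc n)" "\<sigma>' \<in> cons (Suc n)" using a by auto
        note d = doubly_of[OF nk ss ne a(3)]
        have r1: "?r \<sigma> = ?r \<sigma>1"
          using doubly_unique[OF nk cons_restrict[OF ss(1)] cons_restrict[OF s12(1)] d(1) d12(1)] .
        have rr: "?r \<sigma> = ?r \<sigma>1" "?r \<sigma>' = ?r \<sigma>1" using r1 a(3) by auto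
        have eqv: "\<tau> = \<tau>'" if "?r \<tau> = ?r \<tau>'" "\<tau> n = \<tau>' n" for \<tau> \<tau>' :: "nat \<Rightarrow> 'a set"
        proof -
          have "\<tau> = (\<tau>(n:={}))(n:=\<tau> n)" by simp
          also have "\<dots> = (\<tau>'(n:={}))(n:=\<tau>' n)" using that by simp
          also have "\<dots> = \<tau>'" by simp
          finally show ?thesis .
        qed
        have "\<sigma> n \<noteq> \<sigma>' n" using eqv[OF a(3)] ne by blast
        have gg: "g n = {\<sigma> n, \<sigma>' n}" using d(2) .
        have g1: "\<sigma>1 n \<in> g n" using d12(2) by simp
        have "\<sigma>1 n \<in> {\<sigma> n, \<sigma>' n}" using g1 unfolding gg .
        then have "\<sigma>1 n = \<sigma> n \<or> \<sigma>1 n = \<sigma>' n" by simp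
        then show False
        proof
          assume "\<sigma>1 n = \<sigma> n"
          then have "\<sigma> = \<sigma>1" using eqv[OF rr(1)] by simp
          then show False using a(1) by simp
        next
          assume "\<sigma>1 n = \<sigma>' n"
          then have "\<sigma>' = \<sigma>1" using eqv[OF rr(2)] by simp
          then show False using a(2) by simp
        qed
      qed
    qed
    then have "card (cons (Suc n) - {\<sigma>1}) = card (?r ` (cons (Suc n) - {\<sigma>1}))" by (simp add: card_image)
    also have "\<dots> \<le> card (cons n)" using rsub[of "cons (Suc n) - {\<sigma>1}"] IH(1) by (intro card_mono) auto
    finally have "card (cons (Suc n) - {\<sigma>1}) \<le> card (cons n)" .
    then show ?thesis using fin s12(1) by (simp add: card_Diff_singleton)
  qed
  then show ?case using fin IH(2) by simp
qed


lemma cut_obtain: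
  assumes "is_cut X c"
  obtains A where "A \<in> c" "c = {A, E - A}" "A \<subseteq> E" "A \<noteq> {}" "E - A \<noteq> {}"
proof -
  obtain U V where "c = {U, V}" using assms unfolding is_cut_def by blast
  then have "U \<in> c" by simp
  note cs = cut_side[OF assms this]
  show ?thesis by (rule that[OF \<open>U \<in> c\<close> cs(1-4)])
qed

lemma extend_aux:
  assumes "I \<subseteq> {..<k}" "\<forall>i\<in>I. \<tau> i \<in> g i" "\<forall>i\<in>I. \<forall>j\<in>I. \<tau> i \<inter> \<tau> j \<noteq> {}"
  shows "n \<le> k \<Longrightarrow> \<exists>\<sigma>. (\<forall>i\<in>I \<union> {..<n}. \<sigma> i \<in> g i) \<and> (\<forall>i\<in>I. \<sigma> i = \<tau> i)
            \<and> (\<forall>i\<in>I \<union> {..<n}. \<forall>j\<in>I \<union> {..<n}. \<sigma> i \<inter> \<sigma> j \<noteq> {})"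
proof (induction n)
  case 0
  then show ?case using assms by (intro exI[of _ \<tau>]) auto
next
  case (Suc n)
  then obtain \<sigma> where s: "\<forall>i\<in>I \<union> {..<n}. \<sigma> i \<in> g i" "\<forall>i\<in>I. \<sigma> i = \<tau> i"
      "\<forall>i\<in>I \<union> {..<n}. \<forall>j\<in>I \<union> {..<n}. \<sigma> i \<inter> \<sigma> j \<noteq> {}" by auto
  have nk: "n < k" using Suc.prems by simp
  show ?case
  proof (cases "n \<in> I")
    case True
    have "I \<union> {..<Suc n} = I \<union> {..<n}" using True by (auto simp: less_Suc_eq)
    then show ?thesis using s by (intro exI[of _ \<sigma>]) simp
  next
    case False
    let ?J = "I \<union> {..<n}"
    have J: "I \<union> {..<Suc n} = insert n ?J" by auto
    have Jk: "?J \<subseteq> {..<k}" using assms(1) nk by auto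
    have sub: "\<sigma> t \<subseteq> E" if "t \<in> ?J" for t
      using cut_side(2)[OF gcut s(1)[rule_format, OF that]] Jk that by blast
    obtain A where A: "A \<in> g n" "g n = {A, E - A}" "A \<subseteq> E" "A \<noteq> {}" "E - A \<noteq> {}"
      using cut_obtain[OF gcut[OF nk]] by blast
    obtain B where B: "B \<in> g n" "B \<noteq> {}" "\<forall>t\<in>?J. \<sigma> t \<inter> B \<noteq> {}"
    proof (cases "\<forall>t\<in>?J. \<sigma> t \<inter> A \<noteq> {}")
      case True then show ?thesis using that A by blast
    next
      case False
      then obtain t0 where t0: "t0 \<in> ?J" "\<sigma> t0 \<inter> A = {}" by blast
      have "\<forall>t\<in>?J. \<sigma> t \<inter> (E - A) \<noteq> {}"
      proof
        fix t assume t: "t \<in> ?J"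
        show "\<sigma> t \<inter> (E - A) \<noteq> {}"
        proof
          assume "\<sigma> t \<inter> (E - A) = {}"
          then have "\<sigma> t \<subseteq> A" using sub[OF t] by blast
          then have "\<sigma> t0 \<inter> \<sigma> t = {}" using t0 by blast
          then show False using s(3) t t0(1) by blast
        qed
      qed
      moreover have "E - A \<in> g n" using A(2) by simp
      ultimately show ?thesis using that[of "E - A"] A(5) by blast
    qed
    show ?thesis
    proof (intro exI[of _ "\<sigma>(n := B)"] conjI)
      show "\<forall>i\<in>I \<union> {..<Suc n}. (\<sigma>(n := B)) i \<in> g i" unfolding J using s(1) B(1) by auto
      show "\<forall>i\<in>I. (\<sigma>(n := B)) i = \<tau> i" using s(2) False by auto
      show "\<forall>i\<in>I \<union> {..<Suc n}. \<forall>j\<in>I \<union> {..<Suc n}. (\<sigma>(n := B)) i \<inter> (\<sigma>(n := B)) j \<noteq> {}"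
        unfolding J using s(3) B(2,3) False by (auto simp: Int_commute)
    qed
  qed
qed

lemma extend:
  assumes "I \<subseteq> {..<k}" "\<forall>i\<in>I. \<tau> i \<in> g i" "\<forall>i\<in>I. \<forall>j\<in>I. \<tau> i \<inter> \<tau> j \<noteq> {}"
  shows "\<exists>\<sigma>\<in>cons k. \<forall>i\<in>I. \<sigma> i = \<tau> i"
proof -
  obtain \<sigma> where s: "\<forall>i\<in>I \<union> {..<k}. \<sigma> i \<in> g i" "\<forall>i\<in>I. \<sigma> i = \<tau> i"
      "\<forall>i\<in>I \<union> {..<k}. \<forall>j\<in>I \<union> {..<k}. \<sigma> i \<inter> \<sigma> j \<noteq> {}"
    using extend_aux[OF assms, of k] by auto
  show ?thesis
    using s assms(1) by (intro bexI[of _ "\<lambda>i. if i < k then \<sigma> i else {}"]) (auto simp: cons_def)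
qed


lemma cross_ori:
  assumes "d \<in> L" "d' \<in> L" "crosses d d'"
  shows "ori d = ori d'"
proof
  fix i
  show "ori d i = ori d' i"
  proof (cases "i < k")
    case False then show ?thesis by (simp add: ori_out)
  next
    case True
    obtain D where D: "D \<in> d" "D \<subseteq> ori d i" using ori_in(2)[OF assms(1) True] by blast
    obtain D' where D': "D' \<in> d'" "D' \<subseteq> ori d' i" using ori_in(2)[OF assms(2) True] by blast
    show ?thesis
    proof (rule ccontr)
      assume ne: "ori d i \<noteq> ori d' i"
      have gi: "g i = {ori d i, E - ori d i}" using cut_side(1)[OF gcut[OF True] ori_in(1)[OF assms(1) True]] .
      have "ori d' i \<in> g i" using ori_in(1)[OF assms(2) True] .
      then have "ori d' i = E - ori d i" using ne unfolding gi by blast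
      then have "D \<inter> D' = {}" using D(2) D'(2) by blast
      moreover have "D \<inter> D' \<noteq> {}" using assms(3) D(1) D'(1) unfolding crosses_def by blast
      ultimately show False by simp
    qed
  qed
qed

lemma gfin: "i < k \<Longrightarrow> finite (g i)"
proof -
  assume "i < k"
  then obtain A where "g i = {A, E - A}" using cut_obtain[OF gcut] by metis
  then show ?thesis by simp
qed

lemma split_side:
  assumes "d \<in> L" "D \<in> d"
  shows "\<exists>D1. openin X D1 \<and> closedin X D1 \<and> D1 \<subseteq> D \<and> D1 \<noteq> {} \<and> D - D1 \<noteq> {}
           \<and> (\<forall>i<k. \<forall>A\<in>g i. A \<subseteq> D \<longrightarrow> A \<subseteq> D1 \<or> A \<inter> D1 = {})"
proof -
  have dside: "d = {D, E - D}" "D \<subseteq> E" "E - D \<noteq> {}" "openin X D" "closedin X D"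
    using cut_side[OF L_cut[OF assms(1)] assms(2)] by auto
  define \<A> where "\<A> = {A. \<exists>i<k. A \<in> g i \<and> A \<subseteq> D}"
  have "\<A> \<subseteq> \<Union> (g ` {..<k})" unfolding \<A>_def by blast
  moreover have "finite (\<Union> (g ` {..<k}))" using gfin by auto
  ultimately have finA: "finite \<A>" by (rule finite_subset)
  show ?thesis
  proof (cases "\<A> = {}")
    case True
    obtain x y where xy: "x \<in> D" "y \<in> D" "x \<noteq> y"
      using L_np[OF assms(1)] assms(2) unfolding non_peripheral_def by blast
    obtain T where T: "openin X T" "closedin X T" "x \<in> T" "y \<notin> T"
      using stone_sep[OF stone _ _ xy(3)] xy(1,2) dside(2) by blast
    have "\<forall>i<k. \<forall>A\<in>g i. A \<subseteq> D \<longrightarrow> A \<subseteq> D \<inter> T \<or> A \<inter> (D \<inter> T) = {}"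
      using True unfolding \<A>_def by blast
    moreover have "openin X (D \<inter> T)" using dside(4) T(1) by (rule openin_Int)
    moreover have "closedin X (D \<inter> T)" using dside(5) T(2) by (rule closedin_Int)
    moreover have "D \<inter> T \<noteq> {}" "D - D \<inter> T \<noteq> {}" using xy T by blast+
    ultimately show ?thesis by (intro exI[of _ "D \<inter> T"]) blast
  next
    case False
    obtain A0 where A0: "A0 \<in> \<A>" "\<forall>B\<in>\<A>. A0 \<subseteq> B \<longrightarrow> A0 = B"
      using finite_has_maximal[OF finA False] by blast
    obtain i0 where i0: "i0 < k" "A0 \<in> g i0" "A0 \<subseteq> D" using A0(1) unfolding \<A>_def by blast
    note a0s = cut_side[OF gcut[OF i0(1)] i0(2)]
    have "A0 \<noteq> D"
    proof
      assume "A0 = D"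
      then have "g i0 = d" using a0s(1) dside(1) by simp
      then show False using L_ne[OF assms(1) i0(1)] by simp
    qed
    then have ne2: "D - A0 \<noteq> {}" using i0(3) by blast
    have lam: "A \<subseteq> A0 \<or> A \<inter> A0 = {}" if ik: "i < k" and A: "A \<in> g i" "A \<subseteq> D" for i A
    proof -
      note as = cut_side[OF gcut[OF ik] A(1)]
      obtain P Q where PQ: "P \<in> g i" "Q \<in> g i0" "P \<inter> Q = {}"
        using compat_disj[OF comp[OF ik i0(1)]] by blast
      have P: "P = A \<or> P = E - A" using PQ(1) as(1) by blast
      have Q: "Q = A0 \<or> Q = E - A0" using PQ(2) a0s(1) by blast
      show ?thesis
      proof (cases "P = A")
        case PA: True
        show ?thesis
        proof (cases "Q = A0")
          case True then show ?thesis using PA PQ(3) by simp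
        next
          case False then have "Q = E - A0" using Q by simp
          then show ?thesis using PA PQ(3) as(2) by blast
        qed
      next
        case False
        then have PA: "P = E - A" using P by simp
        show ?thesis
        proof (cases "Q = A0")
          case True
          then have "A0 \<subseteq> A" using PA PQ(3) a0s(2) by blast
          moreover have "A \<in> \<A>" unfolding \<A>_def using ik A by blast
          ultimately have "A0 = A" using A0(2) by blast
          then show ?thesis by simp
        next
          case False then have "Q = E - A0" using Q by simp
          then have "E \<subseteq> A \<union> A0" using PA PQ(3) by blast
          then have "E \<subseteq> D" using A(2) i0(3) by blast
          then show ?thesis using dside(3) by blast
        qed
      qed
    qed
    show ?thesis
      using a0s(5,6) i0(3) a0s(3) ne2 lam by (intro exI[of _ A0]) blast
  qed
qed


lemma not_cross_self: "is_cut X d \<Longrightarrow> \<not> crosses d d"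
proof
  assume c: "is_cut X d" "crosses d d"
  obtain D where "D \<in> d" "d = {D, E - D}" using cut_obtain[OF c(1)] by metis
  then have "E - D \<in> d" by simp
  then have "D \<inter> (E - D) \<noteq> {}" using c(2) \<open>D \<in> d\<close> unfolding crosses_def by blast
  then show False by blast
qed

lemma bridge:
  assumes dL: "d \<in> L" and d'L: "d' \<in> L" and eq: "ori d = ori d'" and DF: "D \<in> d" "F \<in> d'" "D \<inter> F = {}"
  shows "\<exists>e\<in>L. crosses d e \<and> crosses e d'"
proof -
  note ds = cut_side[OF L_cut[OF dL] DF(1)]
  note fs = cut_side[OF L_cut[OF d'L] DF(2)]
  obtain D1 where D1: "openin X D1" "closedin X D1" "D1 \<subseteq> D" "D1 \<noteq> {}" "D - D1 \<noteq> {}"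
      "\<forall>i<k. \<forall>A\<in>g i. A \<subseteq> D \<longrightarrow> A \<subseteq> D1 \<or> A \<inter> D1 = {}"
    using split_side[OF dL DF(1)] by blast
  obtain F1 where F1: "openin X F1" "closedin X F1" "F1 \<subseteq> F" "F1 \<noteq> {}" "F - F1 \<noteq> {}"
      "\<forall>i<k. \<forall>A\<in>g i. A \<subseteq> F \<longrightarrow> A \<subseteq> F1 \<or> A \<inter> F1 = {}"
    using split_side[OF d'L DF(2)] by blast
  define P where "P = D1 \<union> F1"
  define e where "e = {P, E - P}"
  have PE: "P \<subseteq> E" unfolding P_def using D1(3) F1(3) ds(2) fs(2) by blast
  have c1: "D - D1 \<subseteq> E - P" unfolding P_def using F1(3) DF(3) ds(2) by blast
  have c2: "F - F1 \<subseteq> E - P" unfolding P_def using D1(3) DF(3) fs(2) by blast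
  have oP: "openin X P" unfolding P_def using D1(1) F1(1) by (rule openin_Un)
  have cP: "closedin X P" unfolding P_def using D1(2) F1(2) by (rule closedin_Un)
  have oP': "openin X (E - P)" using openin_topspace cP by (rule openin_diff)
  have cP': "closedin X (E - P)" using closedin_topspace oP by (rule closedin_diff)
  have Pne: "P \<noteq> {}" unfolding P_def using D1(4) by blast
  have Pne': "E - P \<noteq> {}" using c1 D1(5) by blast
  have PU: "P \<union> (E - P) = E" using PE by blast
  have ecut: "is_cut X e" unfolding is_cut_def e_def
    apply (rule exI[of _ P], rule exI[of _ "E - P"], intro conjI)
    using oP cP oP' cP' PU Pne Pne' by simp_all
  have enp: "non_peripheral X e"
    unfolding non_peripheral_def
  proof (intro conjI ecut ballI)
    fix A assume "A \<in> e"
    then have "A = P \<or> A = E - P" unfolding e_def by blast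
    then show "\<exists>x y. x \<in> A \<and> y \<in> A \<and> x \<noteq> y"
    proof
      assume "A = P"
      obtain x y where "x \<in> D1" "y \<in> F1" using D1(4) F1(4) by blast
      moreover have "x \<noteq> y" using calculation D1(3) F1(3) DF(3) by blast
      ultimately show ?thesis unfolding \<open>A = P\<close> P_def by blast
    next
      assume "A = E - P"
      obtain x y where "x \<in> D - D1" "y \<in> F - F1" using D1(5) F1(5) by blast
      moreover have "x \<noteq> y" using calculation DF(3) by blast
      ultimately show ?thesis unfolding \<open>A = E - P\<close> using c1 c2 by blast
    qed
  qed
  have FD: "F \<subseteq> E - D" using fs(2) DF(3) by blast
  have DF': "D \<subseteq> E - F" using ds(2) DF(3) by blast
  have x1: "P \<inter> D \<noteq> {}" using D1(3,4) unfolding P_def by blast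
  have x2: "P \<inter> (E - D) \<noteq> {}" using F1(3,4) FD unfolding P_def by blast
  have x3: "(E - P) \<inter> D \<noteq> {}" using c1 D1(5) by blast
  have x4: "(E - P) \<inter> (E - D) \<noteq> {}" using c2 F1(5) FD by blast
  have y1: "P \<inter> F \<noteq> {}" using F1(3,4) unfolding P_def by blast
  have y2: "P \<inter> (E - F) \<noteq> {}" using D1(3,4) DF' unfolding P_def by blast
  have y3: "(E - P) \<inter> F \<noteq> {}" using c2 F1(5) by blast
  have y4: "(E - P) \<inter> (E - F) \<noteq> {}" using c1 D1(5) DF' by blast
  have crd: "crosses e d"
    unfolding crosses_def e_def ds(1) using x1 x2 x3 x4 by simp
  have crd': "crosses e d'"
    unfolding crosses_def e_def fs(1) using y1 y2 y3 y4 by simp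
  have eL: "e \<in> L"
    unfolding link_inter_def
  proof (intro CollectI conjI allI impI enp)
    fix i assume ik: "i < k"
    note gs = np[OF ik]
    have ne: "g i \<noteq> e"
    proof
      assume "g i = e"
      then have "crosses (g i) d" using crd by simp
      then show False using L_comp[OF dL ik] unfolding compatible_def by simp
    qed
    have "\<exists>A\<in>g i. \<exists>B\<in>e. A \<inter> B = {}"
    proof (cases "\<exists>A\<in>g i. A \<subseteq> D")
      case True
      then obtain A where A: "A \<in> g i" "A \<subseteq> D" by blast
      then have "A \<subseteq> D1 \<or> A \<inter> D1 = {}" using D1(6) ik by blast
      then show ?thesis
      proof
        assume "A \<subseteq> D1"
        then have "A \<inter> (E - P) = {}" unfolding P_def by blast
        then show ?thesis using A(1) unfolding e_def by blast
      next
        assume "A \<inter> D1 = {}"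
        then have "A \<inter> P = {}" unfolding P_def using A(2) F1(3) DF(3) by blast
        then show ?thesis using A(1) unfolding e_def by blast
      qed
    next
      case nD: False
      show ?thesis
      proof (cases "\<exists>A\<in>g i. A \<subseteq> F")
        case True
        then obtain A where A: "A \<in> g i" "A \<subseteq> F" by blast
        then have "A \<subseteq> F1 \<or> A \<inter> F1 = {}" using F1(6) ik by blast
        then show ?thesis
        proof
          assume "A \<subseteq> F1"
          then have "A \<inter> (E - P) = {}" unfolding P_def by blast
          then show ?thesis using A(1) unfolding e_def by blast
        next
          assume "A \<inter> F1 = {}"
          then have "A \<inter> P = {}" unfolding P_def using A(2) D1(3) DF(3) by blast
          then show ?thesis using A(1) unfolding e_def by blast
        qed
      next
        case nF: False
        obtain A B where AB: "A \<in> g i" "B \<in> d" "A \<inter> B = {}"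
          using compat_disj[OF L_comp[OF dL ik]] by blast
        note as = cut_side[OF gcut[OF ik] AB(1)]
        have "B = D \<or> B = E - D" using AB(2) ds(1) by blast
        moreover have "B \<noteq> E - D"
        proof
          assume "B = E - D"
          then have "A \<subseteq> D" using AB(3) as(2) by blast
          then show False using nD AB(1) by blast
        qed
        ultimately have AD: "A \<inter> D = {}" using AB(3) by blast
        obtain A2 B2 where AB2: "A2 \<in> g i" "B2 \<in> d'" "A2 \<inter> B2 = {}"
          using compat_disj[OF L_comp[OF d'L ik]] by blast
        note as2 = cut_side[OF gcut[OF ik] AB2(1)]
        have "B2 = F \<or> B2 = E - F" using AB2(2) fs(1) by blast
        moreover have "B2 \<noteq> E - F"
        proof
          assume "B2 = E - F"
          then have "A2 \<subseteq> F" using AB2(3) as2(2) by blast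
          then show False using nF AB2(1) by blast
        qed
        ultimately have AF: "A2 \<inter> F = {}" using AB2(3) by blast
        show ?thesis
        proof (cases "A2 = A")
          case True
          then have "A \<inter> P = {}" unfolding P_def using AD AF D1(3) F1(3) by blast
          then show ?thesis using AB(1) unfolding e_def by blast
        next
          case False
          then have A2: "A2 = E - A" using AB2(1) as(1) by blast
          have "E - A \<in> g i" using as(1) by simp
          then have o1: "ori d i = E - A" using ori_eq[OF dL ik _ DF(1)] AD ds(2) by blast
          have "F \<subseteq> A" using AF A2 fs(2) by blast
          then have o2: "ori d' i = A" using ori_eq[OF d'L ik AB(1) DF(2)] by blast
          have "A = E - A" using o1 o2 eq by simp
          then show ?thesis using as(3) by blast
        qed
      qed
    qed
    then have "compatible (g i) e" unfolding compatible_def crosses_def by blast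
    then show "cc_adj X (g i) e" unfolding cc_adj_def using gs enp ne by blast
  qed
  show ?thesis using eL crd crd' crosses_sym by blast
qed


lemma Radj: "x \<in> L \<Longrightarrow> y \<in> L \<Longrightarrow> crosses x y \<Longrightarrow> opp_adj X L x y"
proof -
  assume a: "x \<in> L" "y \<in> L" "crosses x y"
  have "x \<noteq> y" using a(3) not_cross_self[OF L_cut[OF a(1)]] by blast
  moreover have "\<not> cc_adj X x y" using a(3) unfolding cc_adj_def compatible_def by blast
  ultimately show ?thesis unfolding opp_adj_def using a(1,2) by blast
qed

lemma R_ori: "opp_adj X L x y \<Longrightarrow> ori x = ori y"
proof -
  assume a: "opp_adj X L x y"
  then have xy: "x \<in> L" "y \<in> L" "x \<noteq> y" "\<not> cc_adj X x y" unfolding opp_adj_def by auto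
  then have "crosses x y" using L_np unfolding cc_adj_def compatible_def by blast
  then show ?thesis using cross_ori xy(1,2) by blast
qed

lemma comp_eq:
  assumes "c \<in> L"
  shows "{d \<in> L. (opp_adj X L)\<^sup>*\<^sup>* c d} = {d \<in> L. ori d = ori c}"
proof (intro set_eqI iffI)
  fix d assume "d \<in> {d \<in> L. (opp_adj X L)\<^sup>*\<^sup>* c d}"
  then have d: "d \<in> L" "(opp_adj X L)\<^sup>*\<^sup>* c d" by auto
  have "ori c = ori d" using d(2)
  proof (induction rule: rtranclp_induct)
    case base then show ?case by simp
  next
    case (step y z) then show ?case using R_ori by metis
  qed
  then show "d \<in> {d \<in> L. ori d = ori c}" using d(1) by simp
next
  fix d assume "d \<in> {d \<in> L. ori d = ori c}"
  then have d: "d \<in> L" "ori d = ori c" by auto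
  have "(opp_adj X L)\<^sup>*\<^sup>* c d"
  proof (cases "c = d")
    case True then show ?thesis by simp
  next
    case ne: False
    show ?thesis
    proof (cases "crosses c d")
      case True then show ?thesis using Radj[OF assms d(1)] by blast
    next
      case False
      then obtain D F where DF: "D \<in> c" "F \<in> d" "D \<inter> F = {}" unfolding crosses_def by blast
      obtain e where e: "e \<in> L" "crosses c e" "crosses e d"
        using bridge[OF assms d(1) _ DF] d(2) by metis
      have "opp_adj X L c e" using Radj[OF assms e(1,2)] .
      moreover have "opp_adj X L e d" using Radj[OF e(1) d(1) e(3)] .
      ultimately show ?thesis by (meson converse_rtranclp_into_rtranclp r_into_rtranclp)
    qed
  qed
  then show "d \<in> {d \<in> L. (opp_adj X L)\<^sup>*\<^sup>* c d}" using d(1) by simp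
qed

lemma comps_image: "opp_components X L = (\<lambda>\<tau>. {d \<in> L. ori d = \<tau>}) ` (ori ` L)"
  unfolding opp_components_def using comp_eq by auto

lemma comps_card: "finite (opp_components X L) \<and> card (opp_components X L) = card (ori ` L)
   \<and> ori ` L \<subseteq> cons k"
proof -
  have sub: "ori ` L \<subseteq> cons k" using ori_cons by blast
  have fin: "finite (ori ` L)" using finite_subset[OF sub] cons_finite_card[of k] by simp
  have inj: "inj_on (\<lambda>\<tau>. {d \<in> L. ori d = \<tau>}) (ori ` L)"
  proof (rule inj_onI)
    fix a b assume ab: "a \<in> ori ` L" "b \<in> ori ` L" "{d \<in> L. ori d = a} = {d \<in> L. ori d = b}"
    then obtain x where "x \<in> L" "ori x = a" by blast
    then have "x \<in> {d \<in> L. ori d = b}" using ab(3) by blast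
    then show "a = b" using \<open>ori x = a\<close> by simp
  qed
  show ?thesis unfolding comps_image using fin inj sub by (simp add: card_image)
qed


lemma realize:
  assumes "card (opp_components X L) = k + 1" "\<sigma> \<in> cons k"
  shows "\<exists>d\<in>L. ori d = \<sigma>"
proof -
  have cc: "finite (cons k)" "card (cons k) \<le> k + 1" using cons_finite_card[of k] by auto
  have "card (ori ` L) = k + 1" "ori ` L \<subseteq> cons k" using comps_card assms(1) by auto
  then have "ori ` L = cons k" using cc by (metis card_seteq)
  then show ?thesis using assms(2) by (metis imageE)
qed

lemma two_pts_card: "x \<in> D \<Longrightarrow> y \<in> D \<Longrightarrow> x \<noteq> y \<Longrightarrow> D \<subseteq> A \<Longrightarrow> finite A \<Longrightarrow> card A = 2 \<Longrightarrow> D = A"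
proof -
  assume a: "x \<in> D" "y \<in> D" "x \<noteq> y" "D \<subseteq> A" "finite A" "card A = 2"
  have fD: "finite D" using a(4,5) by (rule finite_subset)
  have "card {x, y} \<le> card D" using a(1,2) fD by (intro card_mono) auto
  then have "2 \<le> card D" using a(3) by simp
  then show "D = A" using a(4,5,6) by (metis card_seteq)
qed

lemma part1:
  assumes "card (opp_components X L) = k + 1" "i < k"
  shows "\<not> outermost X (g i)"
proof
  assume "outermost X (g i)"
  then obtain A where A: "A \<in> g i" "finite A" "card A = 2" unfolding outermost_def by blast
  note as = cut_side[OF gcut[OF assms(2)] A(1)]
  obtain \<sigma> where s: "\<sigma> \<in> cons k" "\<sigma> i = A"
    using extend[of "{i}" "\<lambda>_. A"] assms(2) A(1) as(3) by auto
  obtain d where d: "d \<in> L" "ori d = \<sigma>" using realize[OF assms(1) s(1)] by blast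
  obtain D where D: "D \<in> d" "D \<subseteq> A" using ori_in(2)[OF d(1) assms(2)] d(2) s(2) by blast
  obtain x y where xy: "x \<in> D" "y \<in> D" "x \<noteq> y" using L_np[OF d(1)] D(1) unfolding non_peripheral_def by blast
  have "D = A" using two_pts_card[OF xy D(2) A(2,3)] .
  then have "d = g i" using cut_side(1)[OF L_cut[OF d(1)] D(1)] as(1) by simp
  then show False using L_ne[OF d(1) assms(2)] by simp
qed

lemma part2:
  assumes "card (opp_components X L) = k + 1" "i < k" "j < k" "i \<noteq> j"
  shows "\<not> peripheral_pair X (g i) (g j)"
proof
  assume "peripheral_pair X (g i) (g j)"
  then obtain A B x where AB: "A \<in> g i" "B \<in> g j" "A \<inter> B = {x}" unfolding peripheral_pair_def by blast
  note as = cut_side[OF gcut[OF assms(2)] AB(1)]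
  note bs = cut_side[OF gcut[OF assms(3)] AB(2)]
  define \<tau> where "\<tau> = (\<lambda>t. if t = i then A else B)"
  have "\<forall>t\<in>{i, j}. \<forall>u\<in>{i, j}. \<tau> t \<inter> \<tau> u \<noteq> {}" unfolding \<tau>_def using AB(3) as(3) bs(3) assms(4) by auto
  moreover have "\<forall>t\<in>{i, j}. \<tau> t \<in> g t" unfolding \<tau>_def using AB(1,2) assms(4) by auto
  ultimately obtain \<sigma> where s: "\<sigma> \<in> cons k" "\<sigma> i = A" "\<sigma> j = B"
    using extend[of "{i, j}" \<tau>] assms(2,3,4) unfolding \<tau>_def by auto
  obtain d where d: "d \<in> L" "ori d = \<sigma>" using realize[OF assms(1) s(1)] by blast
  obtain D1 where D1: "D1 \<in> d" "D1 \<subseteq> A" using ori_in(2)[OF d(1) assms(2)] d(2) s(2) by blast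
  obtain D2 where D2: "D2 \<in> d" "D2 \<subseteq> B" using ori_in(2)[OF d(1) assms(3)] d(2) s(3) by blast
  note d1s = cut_side[OF L_cut[OF d(1)] D1(1)]
  show False
  proof (cases "D2 = D1")
    case True
    then have "D1 \<subseteq> {x}" using D1(2) D2(2) AB(3) by blast
    moreover obtain y z where "y \<in> D1" "z \<in> D1" "y \<noteq> z" using L_np[OF d(1)] D1(1) unfolding non_peripheral_def by blast
    ultimately show False by blast
  next
    case False
    then have D2e: "D2 = E - D1" using D2(1) d1s(1) by blast
    show False
    proof (cases "x \<in> D1")
      case True
      have "A \<subseteq> D1"
      proof
        fix a assume a: "a \<in> A"
        show "a \<in> D1"
        proof (rule ccontr)
          assume "a \<notin> D1"
          then have "a \<in> D2" using D2e a as(2) by blast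
          then have "a = x" using a D2(2) AB(3) by blast
          then show False using True \<open>a \<notin> D1\<close> by simp
        qed
      qed
      then have "D1 = A" using D1(2) by blast
      then have "d = g i" using d1s(1) as(1) by simp
      then show False using L_ne[OF d(1) assms(2)] by simp
    next
      case False
      have "B \<subseteq> D2"
      proof
        fix b assume b: "b \<in> B"
        show "b \<in> D2"
        proof (rule ccontr)
          assume "b \<notin> D2"
          then have "b \<in> D1" using D2e b bs(2) by blast
          then have "b = x" using b D1(2) AB(3) by blast
          then show False using False \<open>b \<in> D1\<close> by simp
        qed
      qed
      then have "D2 = B" using D2(2) by blast
      then have "d = g j" using cut_side(1)[OF L_cut[OF d(1)] D2(1)] bs(1) by simp
      then show False using L_ne[OF d(1) assms(3)] by simp
    qed
  qed
qed


lemma chain_cross: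
  assumes "is_cut X b" "B \<in> b" "E - C \<in> c" "A \<in> a" "A \<subseteq> B" "B \<subseteq> C" "crosses e a" "crosses e c"
  shows "crosses e b"
  unfolding crosses_def
proof (intro ballI)
  fix P Q assume P: "P \<in> e" and Q: "Q \<in> b"
  have "Q = B \<or> Q = E - B" using Q cut_side(1)[OF assms(1,2)] by blast
  moreover have "P \<inter> A \<noteq> {}" using assms(7) P assms(4) unfolding crosses_def by blast
  moreover have "P \<inter> (E - C) \<noteq> {}" using assms(8) P assms(3) unfolding crosses_def by blast
  ultimately show "P \<inter> Q \<noteq> {}" using assms(5,6) by blast
qed

lemma not_adj:
  assumes "is_cut X b" "B \<in> b" "E - C \<in> c" "A \<in> a" "A \<subseteq> B" "B \<subseteq> C"
    "Gamma_adjacent X \<Gamma> a c" "b \<in> \<Gamma>" "b \<noteq> a" "b \<noteq> c"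
  shows False
proof -
  obtain e where e: "crosses e a" "crosses e c" "\<forall>h\<in>\<Gamma>. h \<noteq> a \<and> h \<noteq> c \<longrightarrow> \<not> crosses e h"
    using assms(7) unfolding Gamma_adjacent_def by blast
  have "crosses e b" using chain_cross[OF assms(1-6) e(1,2)] .
  then show False using e(3) assms(8,9,10) by blast
qed

lemma part3:
  assumes card: "card (opp_components X L) = k + 1" and ijl: "i < k" "j < k" "l < k" "i \<noteq> j" "i \<noteq> l" "j \<noteq> l"
    and tri: "adj_triangle X (g i) (g j) (g l)"
  shows "\<exists>Ui Vi Uj Vj Ul Vl. g i = {Ui, Vi} \<and> g j = {Uj, Vj} \<and> g l = {Ul, Vl}
                 \<and> Ui \<inter> Uj = {} \<and> Ui \<inter> Ul = {} \<and> Uj \<inter> Ul = {} \<and> Vi \<inter> Vj \<inter> Vl \<noteq> {}"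
proof -
  let ?a = "g i" and ?b = "g j" and ?c = "g l"
  let ?G = "{?a, ?b, ?c}"
  have dist: "?a \<noteq> ?b" "?a \<noteq> ?c" "?b \<noteq> ?c" using tri unfolding adj_triangle_def by auto
  have adj: "Gamma_adjacent X ?G ?a ?b" "Gamma_adjacent X ?G ?a ?c" "Gamma_adjacent X ?G ?b ?c"
    using tri unfolding adj_triangle_def by auto
  obtain A0 B0 where AB0: "A0 \<in> ?a" "B0 \<in> ?b" "A0 \<inter> B0 = {}" using compat_disj[OF comp[OF ijl(1,2)]] by blast
  obtain A1 C1 where AC1: "A1 \<in> ?a" "C1 \<in> ?c" "A1 \<inter> C1 = {}" using compat_disj[OF comp[OF ijl(1,3)]] by blast
  obtain B2 C2 where BC2: "B2 \<in> ?b" "C2 \<in> ?c" "B2 \<inter> C2 = {}" using compat_disj[OF comp[OF ijl(2,3)]] by blast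
  note a0 = cut_side[OF gcut[OF ijl(1)] AB0(1)]
  note a1 = cut_side[OF gcut[OF ijl(1)] AC1(1)]
  note b0 = cut_side[OF gcut[OF ijl(2)] AB0(2)]
  note b2 = cut_side[OF gcut[OF ijl(2)] BC2(1)]
  note c1 = cut_side[OF gcut[OF ijl(3)] AC1(2)]
  note c2 = cut_side[OF gcut[OF ijl(3)] BC2(2)]
  have A01: "A1 = A0"
  proof (rule ccontr)
    assume "A1 \<noteq> A0"
    then have "A1 = E - A0" using AC1(1) a0(1) by blast
    then have "B0 \<subseteq> A1" "A1 \<subseteq> E - C1" using AB0(3) b0(2) AC1(3) a1(2) by blast+
    moreover have "E - (E - C1) \<in> ?c" using c1(2) AC1(2) by (simp add: double_diff)
    ultimately show False
      using not_adj[OF gcut[OF ijl(1)] AC1(1) _ AB0(2) _ _ adj(3)] dist by (metis insertCI)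
  qed
  have B02: "B2 = B0"
  proof (rule ccontr)
    assume "B2 \<noteq> B0"
    then have "B2 = E - B0" using BC2(1) b0(1) by blast
    then have "A0 \<subseteq> B2" "B2 \<subseteq> E - C2" using AB0(3) a0(2) BC2(3) b2(2) by blast+
    moreover have "E - (E - C2) \<in> ?c" using c2(2) BC2(2) by (simp add: double_diff)
    ultimately show False
      using not_adj[OF gcut[OF ijl(2)] BC2(1) _ AB0(1) _ _ adj(2)] dist by (metis insertCI)
  qed
  have C12: "C2 = C1"
  proof (rule ccontr)
    assume "C2 \<noteq> C1"
    then have "C2 = E - C1" using BC2(2) c1(1) by blast
    then have "A1 \<subseteq> C2" "C2 \<subseteq> E - B2" using AC1(3) a1(2) BC2(3) c2(2) by blast+
    moreover have "E - (E - B2) \<in> ?b" using b2(2) BC2(1) by (simp add: double_diff)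
    ultimately show False
      using not_adj[OF gcut[OF ijl(3)] BC2(2) _ AC1(1) _ _ adj(1)] dist by (metis insertCI)
  qed
  have dj: "A0 \<inter> B0 = {}" "A0 \<inter> C1 = {}" "B0 \<inter> C1 = {}"
    using AB0(3) AC1(3) BC2(3) A01 B02 C12 by auto
  have V: "(E - A0) \<inter> (E - B0) \<inter> (E - C1) \<noteq> {}"
  proof
    assume emp: "(E - A0) \<inter> (E - B0) \<inter> (E - C1) = {}"
    define \<tau> where "\<tau> = (\<lambda>t. if t = i then E - A0 else if t = j then E - B0 else E - C1)"
    have t: "\<tau> i = E - A0" "\<tau> j = E - B0" "\<tau> l = E - C1" unfolding \<tau>_def using ijl by auto
    have C1s: "C1 \<subseteq> (E - A0) \<inter> (E - B0)" using c1(2) dj(2,3) by blast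
    have B0s: "B0 \<subseteq> (E - A0) \<inter> (E - C1)" using b0(2) dj(1,3) by blast
    have A0s: "A0 \<subseteq> (E - B0) \<inter> (E - C1)" using a0(2) dj(1,2) by blast
    have n1: "(E - A0) \<inter> (E - B0) \<noteq> {}" using C1s c1(3) by blast
    have n2: "(E - A0) \<inter> (E - C1) \<noteq> {}" using B0s b0(3) by blast
    have n3: "(E - B0) \<inter> (E - C1) \<noteq> {}" using A0s a0(3) by blast
    have n1': "(E - B0) \<inter> (E - A0) \<noteq> {}" using n1 by (simp add: Int_commute)
    have n2': "(E - C1) \<inter> (E - A0) \<noteq> {}" using n2 by (simp add: Int_commute)
    have n3': "(E - C1) \<inter> (E - B0) \<noteq> {}" using n3 by (simp add: Int_commute)
    have "\<forall>t\<in>{i, j, l}. \<forall>u\<in>{i, j, l}. \<tau> t \<inter> \<tau> u \<noteq> {}"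
      unfolding Ball_def insert_iff empty_iff
      using t n1 n2 n3 n1' n2' n3' a0(4) b0(4) c1(4) by (metis Int_absorb)
    moreover have "\<forall>t\<in>{i, j, l}. \<tau> t \<in> g t" using t a0(1) b0(1) c1(1) by auto
    ultimately obtain \<sigma> where s: "\<sigma> \<in> cons k" "\<forall>t\<in>{i, j, l}. \<sigma> t = \<tau> t"
      using extend[of "{i, j, l}" \<tau>] ijl(1,2,3) by auto
    obtain d where d: "d \<in> L" "ori d = \<sigma>" using realize[OF card s(1)] by blast
    have st: "ori d i = E - A0" "ori d j = E - B0" "ori d l = E - C1" using s(2) t d(2) by auto
    obtain X1 where X1: "X1 \<in> d" "X1 \<subseteq> E - A0" using ori_in(2)[OF d(1) ijl(1)] st(1) by metis
    obtain X2 where X2: "X2 \<in> d" "X2 \<subseteq> E - B0" using ori_in(2)[OF d(1) ijl(2)] st(2) by metis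
    obtain X3 where X3: "X3 \<in> d" "X3 \<subseteq> E - C1" using ori_in(2)[OF d(1) ijl(3)] st(3) by metis
    note xs = cut_side[OF L_cut[OF d(1)] X1(1)]
    have X2c: "X2 = X1 \<or> X2 = E - X1" using X2(1) xs(1) by blast
    have X3c: "X3 = X1 \<or> X3 = E - X1" using X3(1) xs(1) by blast
    have cov: "E \<subseteq> A0 \<union> B0 \<union> C1" using emp by blast
    show False
    proof (cases "X2 = X1")
      case T2: True
      show False
      proof (cases "X3 = X1")
        case True
        have "X1 \<subseteq> E - B0" using X2(2) T2 by simp
        moreover have "X1 \<subseteq> E - C1" using X3(2) True by simp
        ultimately have "X1 \<subseteq> (E - A0) \<inter> (E - B0) \<inter> (E - C1)" using X1(2) by blast
        then show False using emp xs(3) by blast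
      next
        case False
        then have "X3 = E - X1" using X3c by simp
        have h2: "X1 \<subseteq> E - B0" using X2(2) T2 by simp
        have h3: "E - X1 \<subseteq> E - C1" using X3(2) \<open>X3 = E - X1\<close> by simp
        have "X1 \<subseteq> C1" using X1(2) h2 xs(2) cov by blast
        moreover have "C1 \<subseteq> X1" using h3 c1(2) by blast
        ultimately have "X1 = C1" by blast
        then have "d = g l" using xs(1) c1(1) by simp
        then show False using L_ne[OF d(1) ijl(3)] by simp
      qed
    next
      case F2: False
      then have X2e: "X2 = E - X1" using X2c by simp
      show False
      proof (cases "X3 = X1")
        case True
        have h2: "E - X1 \<subseteq> E - B0" using X2(2) X2e by simp
        have h3: "X1 \<subseteq> E - C1" using X3(2) True by simp
        have "X1 \<subseteq> B0" using X1(2) h3 xs(2) cov by blast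
        moreover have "B0 \<subseteq> X1" using h2 b0(2) by blast
        ultimately have "X1 = B0" by blast
        then have "d = g j" using xs(1) b0(1) by simp
        then show False using L_ne[OF d(1) ijl(2)] by simp
      next
        case False
        then have "X3 = E - X1" using X3c by simp
        have h2: "E - X1 \<subseteq> E - B0" using X2(2) X2e by simp
        have h3: "E - X1 \<subseteq> E - C1" using X3(2) \<open>X3 = E - X1\<close> by simp
        have "E - X1 \<subseteq> A0" using h2 h3 cov by blast
        moreover have "A0 \<subseteq> E - X1" using X1(2) a0(2) by blast
        ultimately have EX: "E - X1 = A0" by blast
        then have X1e: "X1 = E - A0" using xs(2) by blast
        have "d = {E - A0, A0}" using xs(1) EX X1e by simp
        also have "\<dots> = {A0, E - A0}" by (rule insert_commute)
        also have "\<dots> = g i" using a0(1) by simp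
        finally have "d = g i" .
        then show False using L_ne[OF d(1) ijl(1)] by simp
      qed
    qed
  qed
  show ?thesis
    apply (rule exI[of _ A0], rule exI[of _ "E - A0"], rule exI[of _ B0], rule exI[of _ "E - B0"],
        rule exI[of _ C1], rule exI[of _ "E - C1"])
    using a0(1) b0(1) c1(1) dj V by simp
qed

end


theorem mainTheorem11:
  fixes X :: "'a topology" and g :: "nat \<Rightarrow> 'a set set" and k :: nat
  assumes "stone_space X" and "second_countable X"
    and "\<And>i. i < k \<Longrightarrow> non_peripheral X (g i)"
    and "inj_on g {..<k}"
    and "\<And>i j. i < k \<Longrightarrow> j < k \<Longrightarrow> compatible (g i) (g j)"
  shows "finite (opp_components X (link_inter X g k))
      \<and> card (opp_components X (link_inter X g k)) \<le> k + 1
      \<and> (card (opp_components X (link_inter X g k)) = k + 1 \<longrightarrow>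
           (\<forall>i<k. \<not> outermost X (g i))
         \<and> (\<forall>i<k. \<forall>j<k. i \<noteq> j \<longrightarrow> \<not> peripheral_pair X (g i) (g j))
         \<and> (\<forall>i<k. \<forall>j<k. \<forall>l<k. i \<noteq> j \<and> i \<noteq> l \<and> j \<noteq> l \<and> adj_triangle X (g i) (g j) (g l) \<longrightarrow>
              (\<exists>Ui Vi Uj Vj Ul Vl. g i = {Ui, Vi} \<and> g j = {Uj, Vj} \<and> g l = {Ul, Vl}
                 \<and> Ui \<inter> Uj = {} \<and> Ui \<inter> Ul = {} \<and> Uj \<inter> Ul = {} \<and> Vi \<inter> Vj \<inter> Vl \<noteq> {})))"
proof -
  interpret cfg X g k
    using assms(1,3,4,5) by unfold_locales auto
  have cc: "finite (opp_components X L)" "card (opp_components X L) = card (ori ` L)" "ori ` L \<subseteq> cons k"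
    using comps_card by auto
  have ck: "finite (cons k)" "card (cons k) \<le> k + 1" using cons_finite_card[of k] by auto
  have "card (ori ` L) \<le> card (cons k)" using card_mono[OF ck(1) cc(3)] .
  then have le: "card (opp_components X L) \<le> k + 1" using cc(2) ck(2) by simp
  have main: "card (opp_components X L) = k + 1 \<longrightarrow>
           (\<forall>i<k. \<not> outermost X (g i))
         \<and> (\<forall>i<k. \<forall>j<k. i \<noteq> j \<longrightarrow> \<not> peripheral_pair X (g i) (g j))
         \<and> (\<forall>i<k. \<forall>j<k. \<forall>l<k. i \<noteq> j \<and> i \<noteq> l \<and> j \<noteq> l \<and> adj_triangle X (g i) (g j) (g l) \<longrightarrow>
              (\<exists>Ui Vi Uj Vj Ul Vl. g i = {Ui, Vi} \<and> g j = {Uj, Vj} \<and> g l = {Ul, Vl}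
                 \<and> Ui \<inter> Uj = {} \<and> Ui \<inter> Ul = {} \<and> Uj \<inter> Ul = {} \<and> Vi \<inter> Vj \<inter> Vl \<noteq> {}))"
  proof (intro impI conjI allI)
    assume c: "card (opp_components X L) = k + 1"
    fix i assume i: "i < k"
    show "\<not> outermost X (g i)" using part1[OF c i] .
  next
    assume c: "card (opp_components X L) = k + 1"
    fix i j assume "i < k" "j < k" "i \<noteq> j"
    then show "\<not> peripheral_pair X (g i) (g j)" using part2[OF c] by blast
  next
    assume c: "card (opp_components X L) = k + 1"
    fix i j l assume "i < k" "j < k" "l < k"
      "i \<noteq> j \<and> i \<noteq> l \<and> j \<noteq> l \<and> adj_triangle X (g i) (g j) (g l)"
    then show "\<exists>Ui Vi Uj Vj Ul Vl. g i = {Ui, Vi} \<and> g j = {Uj, Vj} \<and> g l = {Ul, Vl}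
                 \<and> Ui \<inter> Uj = {} \<and> Ui \<inter> Ul = {} \<and> Uj \<inter> Ul = {} \<and> Vi \<inter> Vj \<inter> Vl \<noteq> {}"
      using part3[OF c] by blast
  qed
  show ?thesis using cc(1) le main by (intro conjI)
qed

end
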